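(* Consider the second-order Kuramoto model with bonding force $$\dot\theta_i=\omega_i,\qquad \dot\omega_i=\frac{1}{N}\sum_{j=1}^N\big[\kappa_0\cos(\theta_j-\theta_i)+\kappa_1\big](\omega_j-\omega_i)+\frac{\kappa_2}{N}\sum_{j=1}^N\big[|\theta_j-\theta_i|-\theta^\infty_{ij}\big]\operatorname{sgn}(\theta_j-\theta_i),\quad i\in[N].$$ Suppose $(\Theta^0,W^0)\in\mathcal{S}$, $\mathcal{E}(0)<\frac{\kappa_2(\min_{i\ne j}\theta^\infty_{ij})^2}{2N}$, $\kappa_0\cos\mathcal{U}+\kappa_1>0$, $\kappa_2>0$, and let $\{\theta_i\}$ be a global smooth solution. Then $$\inf_{0\le t<\infty}\min_{i\ne j}|\theta_j(t)-\theta_i(t)|\ge\mathcal{L}>0.$$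
   Context: $N\ge2$, $\kappa_0,\kappa_1\ge0$; $[\theta^\infty_{ij}]$ real symmetric with zero diagonal; $\operatorname{sgn}$ the sign function. $\mathcal{E}:=\frac12\sum_i|\omega_i|^2+\frac{\kappa_2}{4N}\sum_{i,j}(|\theta_j-\theta_i|-\theta^\infty_{ij})^2$; $\mathcal{U}:=\max_{i\ne j}\theta^\infty_{ij}+\sqrt{2N\mathcal{E}(0)/\kappa_2}$; $\mathcal{L}:=\min_{i\ne j}\theta^\infty_{ij}-\sqrt{2N\mathcal{E}(0)/\kappa_2}$; $\mathcal{S}:=\{(\Theta,W)\in\mathbb{R}^{2N}:|\theta_i-\theta_j|<\mathcal{U}<\pi\ \forall i,j\}$. *)

theory Defs
  imports "HOL-Analysis.Analysis"
begin

text \<open>Oscillators are indexed by 0..N-1 (i < N). Theta, W : nat => real are configurations.\<close>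

definition kenergy :: "nat \<Rightarrow> real \<Rightarrow> (nat \<Rightarrow> nat \<Rightarrow> real) \<Rightarrow> (nat \<Rightarrow> real) \<Rightarrow> (nat \<Rightarrow> real) \<Rightarrow> real" where
  "kenergy N \<kappa>2 thinf Th W =
     (1/2) * (\<Sum>i<N. (W i)^2)
     + \<kappa>2 / (4 * real N) * (\<Sum>i<N. \<Sum>j<N. (\<bar>Th j - Th i\<bar> - thinf i j)^2)"

definition Ubound :: "nat \<Rightarrow> real \<Rightarrow> (nat \<Rightarrow> nat \<Rightarrow> real) \<Rightarrow> real \<Rightarrow> real" where
  "Ubound N \<kappa>2 thinf E0 =
     Max {thinf i j | i j. i < N \<and> j < N \<and> i \<noteq> j} + sqrt (2 * real N * E0 / \<kappa>2)"

definition Lbound :: "nat \<Rightarrow> real \<Rightarrow> (nat \<Rightarrow> nat \<Rightarrow> real) \<Rightarrow> real \<Rightarrow> real" where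
  "Lbound N \<kappa>2 thinf E0 =
     Min {thinf i j | i j. i < N \<and> j < N \<and> i \<noteq> j} - sqrt (2 * real N * E0 / \<kappa>2)"

end

theory Submission imports Defs begin

lemma DERIV_abs_nz:
  fixes g :: "real \<Rightarrow> real"
  assumes d: "(g has_real_derivative g') (at t)" and nz: "g t \<noteq> 0"
  shows "((\<lambda>s. \<bar>g s\<bar>) has_real_derivative sgn (g t) * g') (at t)"
proof -
  have lim: "(g \<longlongrightarrow> g t) (nhds t)"
    using DERIV_continuous[OF d] by (simp add: isCont_def tendsto_at_iff_tendsto_nhds)
  show ?thesis
  proof (cases "g t > 0")
    case True
    have ev: "eventually (\<lambda>s. \<bar>g s\<bar> = g s) (nhds t)"
      using order_tendstoD(1)[OF lim True] by eventually_elim auto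
    show ?thesis using DERIV_cong_ev[OF refl ev refl] d True by simp
  next
    case False then have neg: "g t < 0" using nz by simp
    have ev: "eventually (\<lambda>s. \<bar>g s\<bar> = - g s) (nhds t)"
      using order_tendstoD(2)[OF lim neg] by eventually_elim auto
    have "((\<lambda>s. - g s) has_real_derivative - g') (at t)" using d by (rule DERIV_minus)
    then show ?thesis using DERIV_cong_ev[OF refl ev refl] neg by simp
  qed
qed

lemma algA:
  fixes a :: "nat \<Rightarrow> nat \<Rightarrow> real" and w :: "nat \<Rightarrow> real"
  assumes asym: "\<And>i j. i < N \<Longrightarrow> j < N \<Longrightarrow> a i j = a j i"
  shows "(\<Sum>i<N. \<Sum>j<N. a i j * w i * (w j - w i)) = -(1/2) * (\<Sum>i<N. \<Sum>j<N. a i j * (w j - w i)^2)"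
proof -
  let ?X = "\<Sum>i<N. \<Sum>j<N. a i j * w i * (w j - w i)"
  have "?X = (\<Sum>j<N. \<Sum>i<N. a i j * w i * (w j - w i))" by (rule sum.swap)
  also have "\<dots> = (\<Sum>i<N. \<Sum>j<N. a i j * w j * (w i - w j))"
    by (intro sum.cong refl) (metis asym lessThan_iff)
  finally have "?X + ?X = (\<Sum>i<N. \<Sum>j<N. a i j * w i * (w j - w i) + a i j * w j * (w i - w j))"
    by (simp add: sum.distrib)
  also have "\<dots> = (\<Sum>i<N. \<Sum>j<N. - (a i j * (w j - w i)^2))"
    by (intro sum.cong refl) (simp add: power2_eq_square algebra_simps)
  also have "\<dots> = - (\<Sum>i<N. \<Sum>j<N. a i j * (w j - w i)^2)"
    by (simp add: sum_negf)
  finally show ?thesis by simp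
qed

lemma algB:
  fixes f :: "nat \<Rightarrow> nat \<Rightarrow> real" and w :: "nat \<Rightarrow> real"
  assumes asym: "\<And>i j. i < N \<Longrightarrow> j < N \<Longrightarrow> f j i = - f i j"
  shows "(\<Sum>i<N. \<Sum>j<N. f i j * (w j - w i)) = -2 * (\<Sum>i<N. \<Sum>j<N. w i * f i j)"
proof -
  have "(\<Sum>i<N. \<Sum>j<N. f i j * w j) = (\<Sum>j<N. \<Sum>i<N. f i j * w j)" by (rule sum.swap)
  also have "\<dots> = (\<Sum>i<N. \<Sum>j<N. - (w i * f i j))"
    by (intro sum.cong refl) (metis asym lessThan_iff mult.commute mult_minus_left)
  also have "\<dots> = - (\<Sum>i<N. \<Sum>j<N. w i * f i j)" by (simp add: sum_negf)
  finally have e: "(\<Sum>i<N. \<Sum>j<N. f i j * w j) = - (\<Sum>i<N. \<Sum>j<N. w i * f i j)" .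
  have "(\<Sum>i<N. \<Sum>j<N. f i j * (w j - w i)) = (\<Sum>i<N. \<Sum>j<N. f i j * w j) - (\<Sum>i<N. \<Sum>j<N. w i * f i j)"
    by (simp add: sum_subtractf algebra_simps)
  then show ?thesis using e by simp
qed


lemma energy_deriv:
  fixes \<theta> \<omega> :: "real \<Rightarrow> nat \<Rightarrow> real" and F :: "nat \<Rightarrow> real" and a :: "nat \<Rightarrow> nat \<Rightarrow> real"
  assumes Npos: "N > 0"
    and sym: "\<And>i j. i < N \<Longrightarrow> j < N \<Longrightarrow> thinf i j = thinf j i"
    and dth: "\<And>i. i < N \<Longrightarrow> ((\<lambda>s. \<theta> s i) has_real_derivative \<omega> t i) (at t)"
    and dom: "\<And>i. i < N \<Longrightarrow> ((\<lambda>s. \<omega> s i) has_real_derivative F i) (at t)"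
    and F: "\<And>i. i < N \<Longrightarrow> F i = (1 / real N) * (\<Sum>j<N. a i j * (\<omega> t j - \<omega> t i))
          + (\<kappa>2 / real N) * (\<Sum>j<N. (\<bar>\<theta> t j - \<theta> t i\<bar> - thinf i j) * sgn (\<theta> t j - \<theta> t i))"
    and asym: "\<And>i j. i < N \<Longrightarrow> j < N \<Longrightarrow> a i j = a j i"
    and nz: "\<And>i j. i < N \<Longrightarrow> j < N \<Longrightarrow> i \<noteq> j \<Longrightarrow> \<theta> t j \<noteq> \<theta> t i"
  shows "((\<lambda>s. kenergy N \<kappa>2 thinf (\<theta> s) (\<omega> s)) has_real_derivative
           -(1 / (2 * real N)) * (\<Sum>i<N. \<Sum>j<N. a i j * (\<omega> t j - \<omega> t i)^2)) (at t)"
proof -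
  define w where "w = \<omega> t"
  define f where "f i j = (\<bar>\<theta> t j - \<theta> t i\<bar> - thinf i j) * sgn (\<theta> t j - \<theta> t i)" for i j
  have d1: "((\<lambda>s. (1/2) * (\<Sum>i<N. (\<omega> s i)^2)) has_real_derivative (1/2) * (\<Sum>i<N. 2 * w i * F i)) (at t)"
    unfolding w_def
    by (intro DERIV_cmult DERIV_sum) (auto intro!: derivative_eq_intros dom)
  have d2: "((\<lambda>s. (\<bar>\<theta> s j - \<theta> s i\<bar> - thinf i j)^2) has_real_derivative 2 * f i j * (w j - w i)) (at t)"
    if ij: "i < N" "j < N" for i j
  proof (cases "i = j")
    case True
    then show ?thesis by (simp add: f_def)
  next
    case False
    have g: "((\<lambda>s. \<theta> s j - \<theta> s i) has_real_derivative w j - w i) (at t)"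
      unfolding w_def using dth ij by (intro DERIV_diff) auto
    have ab: "((\<lambda>s. \<bar>\<theta> s j - \<theta> s i\<bar>) has_real_derivative sgn (\<theta> t j - \<theta> t i) * (w j - w i)) (at t)"
      using DERIV_abs_nz[OF g] nz[OF ij False] by simp
    have "((\<lambda>s. (\<bar>\<theta> s j - \<theta> s i\<bar> - thinf i j)^2) has_real_derivative
            of_nat 2 * ((sgn (\<theta> t j - \<theta> t i) * (w j - w i) - 0) * (\<bar>\<theta> t j - \<theta> t i\<bar> - thinf i j)^(2 - Suc 0))) (at t)"
      by (intro DERIV_power DERIV_diff ab DERIV_const)
    then show ?thesis by (simp add: f_def algebra_simps)
  qed
  have d3: "((\<lambda>s. \<kappa>2 / (4 * real N) * (\<Sum>i<N. \<Sum>j<N. (\<bar>\<theta> s j - \<theta> s i\<bar> - thinf i j)^2))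
      has_real_derivative \<kappa>2 / (4 * real N) * (\<Sum>i<N. \<Sum>j<N. 2 * f i j * (w j - w i))) (at t)"
    by (intro DERIV_cmult DERIV_sum d2) auto
  have D: "((\<lambda>s. kenergy N \<kappa>2 thinf (\<theta> s) (\<omega> s)) has_real_derivative
     (1/2) * (\<Sum>i<N. 2 * w i * F i) + \<kappa>2 / (4 * real N) * (\<Sum>i<N. \<Sum>j<N. 2 * f i j * (w j - w i))) (at t)"
    unfolding kenergy_def by (rule DERIV_add[OF d1 d3])
  have fas: "f j i = - f i j" if "i < N" "j < N" for i j
  proof -
    have "sgn (\<theta> t i - \<theta> t j) = - sgn (\<theta> t j - \<theta> t i)" by (metis minus_diff_eq sgn_minus)
    then show ?thesis using sym[OF that] by (simp add: f_def abs_minus_commute)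
  qed
  have A: "(\<Sum>i<N. \<Sum>j<N. a i j * w i * (w j - w i)) = -(1/2) * (\<Sum>i<N. \<Sum>j<N. a i j * (w j - w i)^2)"
    by (rule algA) (rule asym)
  have B: "(\<Sum>i<N. \<Sum>j<N. f i j * (w j - w i)) = -2 * (\<Sum>i<N. \<Sum>j<N. w i * f i j)"
    by (rule algB) (rule fas)
  have "(\<Sum>i<N. w i * F i) = (\<Sum>i<N. (1 / real N) * (\<Sum>j<N. a i j * w i * (w j - w i))
          + (\<kappa>2 / real N) * (\<Sum>j<N. w i * f i j))"
    by (intro sum.cong refl) (simp add: F w_def f_def sum_distrib_left algebra_simps)
  also have "\<dots> = (1 / real N) * (\<Sum>i<N. \<Sum>j<N. a i j * w i * (w j - w i))
          + (\<kappa>2 / real N) * (\<Sum>i<N. \<Sum>j<N. w i * f i j)"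
    by (simp add: sum.distrib sum_distrib_left)
  finally have C: "(\<Sum>i<N. w i * F i) = \<dots>" .
  have "(1/2) * (\<Sum>i<N. 2 * w i * F i) + \<kappa>2 / (4 * real N) * (\<Sum>i<N. \<Sum>j<N. 2 * f i j * (w j - w i))
      = (\<Sum>i<N. w i * F i) + \<kappa>2 / (2 * real N) * (\<Sum>i<N. \<Sum>j<N. f i j * (w j - w i))"
    by (simp add: sum_distrib_left[symmetric] mult.assoc)
  also have "\<dots> = -(1 / (2 * real N)) * (\<Sum>i<N. \<Sum>j<N. a i j * (w j - w i)^2)"
    unfolding C A B using Npos by (simp add: field_simps)
  finally show ?thesis using D by (simp add: w_def)
qed


lemma pair_bound:
  fixes c :: "nat \<Rightarrow> nat \<Rightarrow> real" and Th W :: "nat \<Rightarrow> real"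
  assumes sym: "\<And>i j. i < N \<Longrightarrow> j < N \<Longrightarrow> c i j = c j i"
    and ij: "i < N" "j < N" "i \<noteq> j" and k2: "\<kappa>2 > 0"
  shows "\<kappa>2 / (2 * real N) * (\<bar>Th j - Th i\<bar> - c i j)^2 \<le> kenergy N \<kappa>2 c Th W"
proof -
  define g where "g a b = (\<bar>Th b - Th a\<bar> - c a b)^2" for a b
  have gji: "g j i = g i j" using sym[OF ij(1,2)] by (simp add: g_def abs_minus_commute)
  have "g i j \<le> (\<Sum>b<N. g i b)" by (rule member_le_sum) (auto simp: g_def ij)
  moreover have "g j i \<le> (\<Sum>b<N. g j b)" by (rule member_le_sum) (auto simp: g_def ij)
  moreover have "(\<Sum>a\<in>{i,j}. \<Sum>b<N. g a b) \<le> (\<Sum>a<N. \<Sum>b<N. g a b)"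
    by (rule sum_mono2) (auto simp: ij g_def intro: sum_nonneg)
  ultimately have S: "2 * g i j \<le> (\<Sum>a<N. \<Sum>b<N. g a b)" using ij(3) gji by simp
  have N0: "real N > 0" using ij by simp
  have "\<kappa>2 / (2 * real N) * g i j = \<kappa>2 / (4 * real N) * (2 * g i j)" by (simp add: field_simps)
  also have "\<dots> \<le> \<kappa>2 / (4 * real N) * (\<Sum>a<N. \<Sum>b<N. g a b)"
    using S k2 N0 by (intro mult_left_mono) auto
  also have "\<dots> \<le> kenergy N \<kappa>2 c Th W"
    unfolding kenergy_def g_def by (simp add: sum_nonneg)
  finally show ?thesis by (simp add: g_def)
qed

lemma kenergy_nonneg:
  assumes "\<kappa>2 > 0" shows "kenergy N \<kappa>2 c Th W \<ge> 0"
  unfolding kenergy_def using assms by (auto intro!: add_nonneg_nonneg mult_nonneg_nonneg divide_nonneg_nonneg sum_nonneg)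

theorem corollary3p1:
  fixes N :: nat and \<kappa>0 \<kappa>1 \<kappa>2 :: real
    and thinf :: "nat \<Rightarrow> nat \<Rightarrow> real"
    and \<theta> \<omega> :: "real \<Rightarrow> nat \<Rightarrow> real"
  assumes N2: "N \<ge> 2"
    and k0: "\<kappa>0 \<ge> 0" and k1: "\<kappa>1 \<ge> 0" and k2: "\<kappa>2 > 0"
    and sym: "\<And>i j. i < N \<Longrightarrow> j < N \<Longrightarrow> thinf i j = thinf j i"
    and diag: "\<And>i. i < N \<Longrightarrow> thinf i i = 0"
    and dtheta: "\<And>i t. i < N \<Longrightarrow> t \<ge> 0 \<Longrightarrow>
        ((\<lambda>s. \<theta> s i) has_real_derivative \<omega> t i) (at t within {0..})"
    and domega: "\<And>i t. i < N \<Longrightarrow> t \<ge> 0 \<Longrightarrow>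
        ((\<lambda>s. \<omega> s i) has_real_derivative
          (1 / real N) * (\<Sum>j<N. (\<kappa>0 * cos (\<theta> t j - \<theta> t i) + \<kappa>1) * (\<omega> t j - \<omega> t i))
          + (\<kappa>2 / real N) * (\<Sum>j<N. (\<bar>\<theta> t j - \<theta> t i\<bar> - thinf i j) * sgn (\<theta> t j - \<theta> t i)))
        (at t within {0..})"
    and inS: "\<And>i j. i < N \<Longrightarrow> j < N \<Longrightarrow>
        \<bar>\<theta> 0 i - \<theta> 0 j\<bar> < Ubound N \<kappa>2 thinf (kenergy N \<kappa>2 thinf (\<theta> 0) (\<omega> 0))"
    and Upi: "Ubound N \<kappa>2 thinf (kenergy N \<kappa>2 thinf (\<theta> 0) (\<omega> 0)) < pi"
    and E0small: "kenergy N \<kappa>2 thinf (\<theta> 0) (\<omega> 0)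
        < \<kappa>2 * (Min {thinf i j | i j. i < N \<and> j < N \<and> i \<noteq> j})^2 / (2 * real N)"
    and coupling: "\<kappa>0 * cos (Ubound N \<kappa>2 thinf (kenergy N \<kappa>2 thinf (\<theta> 0) (\<omega> 0))) + \<kappa>1 > 0"
  shows "(INF t\<in>{0..}. Min {\<bar>\<theta> t j - \<theta> t i\<bar> | i j. i < N \<and> j < N \<and> i \<noteq> j})
            \<ge> Lbound N \<kappa>2 thinf (kenergy N \<kappa>2 thinf (\<theta> 0) (\<omega> 0))
       \<and> Lbound N \<kappa>2 thinf (kenergy N \<kappa>2 thinf (\<theta> 0) (\<omega> 0)) > 0"
proof -
  define E where "E s = kenergy N \<kappa>2 thinf (\<theta> s) (\<omega> s)" for s
  define E0 where "E0 = E 0"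
  define TS where "TS = {thinf i j | i j. i < N \<and> j < N \<and> i \<noteq> j}"
  define m where "m = Min TS"
  define M where "M = Max TS"
  define r where "r = sqrt (2 * real N * E0 / \<kappa>2)"
  have kE0: "kenergy N \<kappa>2 thinf (\<theta> 0) (\<omega> 0) = E0" by (simp add: E0_def E_def)
  have Ueq: "Ubound N \<kappa>2 thinf (kenergy N \<kappa>2 thinf (\<theta> 0) (\<omega> 0)) = M + r"
    unfolding kE0 by (simp add: Ubound_def M_def TS_def r_def)
  have Leq: "Lbound N \<kappa>2 thinf (kenergy N \<kappa>2 thinf (\<theta> 0) (\<omega> 0)) = m - r"
    unfolding kE0 by (simp add: Lbound_def m_def TS_def r_def)
  have Npos: "real N > 0" using N2 by simp
  have finTS: "finite TS"
    by (rule finite_subset[where B="(\<lambda>(i,j). thinf i j) ` ({..<N}\<times>{..<N})"]) (auto simp: TS_def)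
  have "thinf 0 1 \<in> TS" using N2 unfolding TS_def by (intro CollectI exI[of _ 0] exI[of _ 1]) auto
  then have neTS: "TS \<noteq> {}" by blast
  have E0nn: "E0 \<ge> 0" unfolding E0_def E_def by (rule kenergy_nonneg[OF k2])
  have pb: "\<kappa>2 / (2 * real N) * (\<bar>\<theta> s j - \<theta> s i\<bar> - thinf i j)^2 \<le> E s"
    if "i < N" "j < N" "i \<noteq> j" for s i j
    unfolding E_def by (rule pair_bound[OF sym that k2])
  obtain i0 j0 where ij0: "i0 < N" "j0 < N" "i0 \<noteq> j0" "thinf i0 j0 = m"
  proof -
    have "m \<in> TS" unfolding m_def by (rule Min_in[OF finTS neTS])
    then show ?thesis using that unfolding TS_def by auto
  qed
  have E0s: "E0 < \<kappa>2 * m^2 / (2 * real N)"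
    using E0small unfolding kE0 m_def TS_def .
  define d0 where "d0 = \<bar>\<theta> 0 j0 - \<theta> 0 i0\<bar>"
  have "\<kappa>2 / (2 * real N) * (d0 - m)^2 \<le> E0"
    using pb[OF ij0(1-3), of 0] ij0(4) by (simp add: d0_def E0_def)
  then have "\<kappa>2 / (2 * real N) * (d0 - m)^2 < \<kappa>2 / (2 * real N) * m^2" using E0s by simp
  then have dm: "(d0 - m)^2 < m^2" using k2 Npos
    by (metis divide_pos_pos mult_less_cancel_left_pos zero_less_numeral mult_pos_pos)
  have mpos: "m > 0"
  proof (rule ccontr)
    assume "\<not> m > 0"
    then have "(-m)^2 \<le> (d0 - m)^2" by (intro power_mono) (auto simp: d0_def)
    then show False using dm by simp
  qed
  have "2 * real N * E0 / \<kappa>2 < m^2" using E0s k2 Npos by (simp add: field_simps)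
  then have rm: "r < m" unfolding r_def using mpos
    by (metis abs_of_pos real_sqrt_abs real_sqrt_less_mono)
  have rnn: "r \<ge> 0" unfolding r_def using E0nn k2 Npos by simp
  have bnd: "m - r \<le> \<bar>\<theta> s j - \<theta> s i\<bar> \<and> \<bar>\<theta> s j - \<theta> s i\<bar> \<le> M + r"
    if Es: "E s \<le> E0" and ij: "i < N" "j < N" "i \<noteq> j" for s i j
  proof -
    have "(\<bar>\<theta> s j - \<theta> s i\<bar> - thinf i j)^2 \<le> 2 * real N * E s / \<kappa>2"
      using pb[OF ij, of s] k2 Npos by (simp add: field_simps)
    also have "\<dots> \<le> 2 * real N * E0 / \<kappa>2" using Es k2 Npos by (simp add: divide_right_mono)
    finally have "\<bar>\<bar>\<theta> s j - \<theta> s i\<bar> - thinf i j\<bar> \<le> r" unfolding r_def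
      by (metis real_le_rsqrt power2_abs)
    moreover have "thinf i j \<in> TS" using ij unfolding TS_def by blast
    then have "m \<le> thinf i j" "thinf i j \<le> M" unfolding m_def M_def using finTS by auto
    ultimately show ?thesis by linarith
  qed
  have Upi': "M + r < pi" using Upi Ueq by simp
  have cpos: "\<kappa>0 * cos x + \<kappa>1 > 0" if "\<bar>x\<bar> \<le> M + r" for x
  proof -
    have "cos (M + r) \<le> cos \<bar>x\<bar>" by (rule cos_monotone_0_pi_le) (use that Upi' in auto)
    then have "\<kappa>0 * cos (M + r) \<le> \<kappa>0 * cos x" using k0 by (simp add: mult_left_mono)
    then show ?thesis using coupling Ueq by simp
  qed
  have cth: "continuous_on {0..} (\<lambda>s. \<theta> s i)" if "i < N" for i
    using DERIV_continuous[OF dtheta[OF that]] continuous_on_eq_continuous_within by blast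
  have cw: "continuous_on {0..} (\<lambda>s. \<omega> s i)" if "i < N" for i
    using DERIV_continuous[OF domega[OF that]] continuous_on_eq_continuous_within by blast
  have cE: "continuous_on {0..} E"
    unfolding E_def kenergy_def by (intro continuous_intros) (auto intro: cth cw)
  have Ele: "E t \<le> E0" if "t \<ge> 0" for t
  proof (rule ccontr)
    assume "\<not> E t \<le> E0"
    then have t1: "E t > E0" by simp
    define Z where "Z = {0..t} \<inter> E -` {..E0}"
    have clZ: "closed Z" unfolding Z_def
      by (rule continuous_closed_preimage[OF continuous_on_subset[OF cE]]) auto
    have Z0: "0 \<in> Z" using that by (simp add: Z_def E0_def)
    have bdZ: "bdd_above Z" unfolding Z_def by (rule bdd_aboveI[of _ t]) auto
    define s0 where "s0 = Sup Z"
    have s0Z: "s0 \<in> Z" unfolding s0_def using closed_contains_Sup[OF _ bdZ clZ] Z0 by auto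
    then have s0: "0 \<le> s0" "s0 \<le> t" "E s0 \<le> E0" by (auto simp: Z_def)
    have s0lt: "s0 < t" proof (rule ccontr)
      assume "\<not> s0 < t" then have "s0 = t" using s0 by simp
      then show False using s0 t1 by simp
    qed
    have above: "E u > E0" if "s0 < u" "u \<le> t" for u
    proof (rule ccontr)
      assume "\<not> E u > E0"
      then have "u \<in> Z" using that s0 by (auto simp: Z_def)
      then have "u \<le> s0" unfolding s0_def by (rule cSup_upper[OF _ bdZ])
      then show False using that by simp
    qed
    define Q where "Q u \<longleftrightarrow> (\<forall>p\<in>{..<N}\<times>{..<N}. fst p \<noteq> snd p \<longrightarrow>
        \<theta> u (snd p) - \<theta> u (fst p) \<noteq> 0 \<and> \<kappa>0 * cos (\<theta> u (snd p) - \<theta> u (fst p)) + \<kappa>1 > 0)" for u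
    have evQ: "eventually Q (at s0 within {0..})"
      unfolding Q_def
    proof (intro eventually_ball_finite ballI)
      show "finite ({..<N}\<times>{..<N})" by simp
    next
      fix p assume p: "p \<in> {..<N}\<times>{..<N}"
      obtain i j where pij: "p = (i, j)" by fastforce
      have ij: "i < N" "j < N" using p pij by auto
      show "\<forall>\<^sub>F u in at s0 within {0..}. fst p \<noteq> snd p \<longrightarrow>
        \<theta> u (snd p) - \<theta> u (fst p) \<noteq> 0 \<and> \<kappa>0 * cos (\<theta> u (snd p) - \<theta> u (fst p)) + \<kappa>1 > 0"
      proof (cases "i = j")
        case True then show ?thesis by (simp add: pij)
      next
        case False
        have ti: "((\<lambda>u. \<theta> u i) \<longlongrightarrow> \<theta> s0 i) (at s0 within {0..})"
          using DERIV_continuous[OF dtheta[OF ij(1) s0(1)]] by (simp add: continuous_within)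
        have tj: "((\<lambda>u. \<theta> u j) \<longlongrightarrow> \<theta> s0 j) (at s0 within {0..})"
          using DERIV_continuous[OF dtheta[OF ij(2) s0(1)]] by (simp add: continuous_within)
        have h: "((\<lambda>u. \<theta> u j - \<theta> u i) \<longlongrightarrow> \<theta> s0 j - \<theta> s0 i) (at s0 within {0..})"
          by (intro tendsto_diff ti tj)
        have hc: "((\<lambda>u. \<kappa>0 * cos (\<theta> u j - \<theta> u i) + \<kappa>1) \<longlongrightarrow> \<kappa>0 * cos (\<theta> s0 j - \<theta> s0 i) + \<kappa>1) (at s0 within {0..})"
          by (intro tendsto_intros h)
        have b: "m - r \<le> \<bar>\<theta> s0 j - \<theta> s0 i\<bar> \<and> \<bar>\<theta> s0 j - \<theta> s0 i\<bar> \<le> M + r"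
          by (rule bnd[OF s0(3) ij False])
        have hn: "\<theta> s0 j - \<theta> s0 i \<noteq> 0" using b rm by auto
        have hp: "\<kappa>0 * cos (\<theta> s0 j - \<theta> s0 i) + \<kappa>1 > 0" using cpos b by blast
        have "eventually (\<lambda>u. \<theta> u j - \<theta> u i \<noteq> 0) (at s0 within {0..})"
          by (rule tendsto_imp_eventually_ne[OF h hn])
        moreover have "eventually (\<lambda>u. \<kappa>0 * cos (\<theta> u j - \<theta> u i) + \<kappa>1 > 0) (at s0 within {0..})"
          by (rule order_tendstoD(1)[OF hc hp])
        ultimately show ?thesis by eventually_elim (simp add: pij)
      qed
    qed
    then obtain \<delta> where \<delta>: "\<delta> > 0" "\<And>u. u \<in> {0..} \<Longrightarrow> u \<noteq> s0 \<Longrightarrow> dist u s0 < \<delta> \<Longrightarrow> Q u"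
      unfolding eventually_at by blast
    define b where "b = min (s0 + \<delta>/2) t"
    have b: "s0 < b" "b \<le> t" using \<delta> s0lt by (auto simp: b_def)
    have Qx: "Q x" if "s0 < x" "x < b" for x
      using \<delta>(2)[of x] that s0 \<delta>(1) by (auto simp: b_def dist_real_def)
    define a where "a x i j = \<kappa>0 * cos (\<theta> x j - \<theta> x i) + \<kappa>1" for x i j
    define D where "D x = -(1 / (2 * real N)) * (\<Sum>i<N. \<Sum>j<N. a x i j * (\<omega> x j - \<omega> x i)^2)" for x
    have Dx: "(E has_real_derivative D x) (at x) \<and> D x \<le> 0" if x: "s0 < x" "x < b" for x
    proof -
      have xpos: "x > 0" using x s0 by simp
      have atx: "at x within {0<..} = at x" by (rule at_within_open) (use xpos in auto)
      have dth': "((\<lambda>s. \<theta> s i) has_real_derivative \<omega> x i) (at x)" if "i < N" for i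
        using DERIV_subset[OF dtheta[OF that], of x "{0<..}"] xpos atx by force
      have dom': "((\<lambda>s. \<omega> s i) has_real_derivative
          (1 / real N) * (\<Sum>j<N. (\<kappa>0 * cos (\<theta> x j - \<theta> x i) + \<kappa>1) * (\<omega> x j - \<omega> x i))
          + (\<kappa>2 / real N) * (\<Sum>j<N. (\<bar>\<theta> x j - \<theta> x i\<bar> - thinf i j) * sgn (\<theta> x j - \<theta> x i))) (at x)"
        if "i < N" for i
        using DERIV_subset[OF domega[OF that], of x "{0<..}"] xpos atx by force
      have asym: "a x i j = a x j i" for i j
        unfolding a_def by (metis cos_minus minus_diff_eq)
      have q: "Q x" by (rule Qx[OF x])
      have qij: "\<theta> x j - \<theta> x i \<noteq> 0 \<and> \<kappa>0 * cos (\<theta> x j - \<theta> x i) + \<kappa>1 > 0"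
        if "i < N" "j < N" "i \<noteq> j" for i j
        using q[unfolded Q_def, rule_format, of "(i, j)"] that by simp
      have nz: "\<theta> x j \<noteq> \<theta> x i" if "i < N" "j < N" "i \<noteq> j" for i j
        using qij[OF that] by simp
      have anr: "a x i j \<ge> 0" if "i < N" "j < N" for i j
      proof (cases "i = j")
        case True then show ?thesis using k0 k1 by (simp add: a_def)
      next
        case False then show ?thesis using qij[OF that False] unfolding a_def by simp
      qed
      have dom'': "((\<lambda>s. \<omega> s i) has_real_derivative
          (1 / real N) * (\<Sum>j<N. a x i j * (\<omega> x j - \<omega> x i))
          + (\<kappa>2 / real N) * (\<Sum>j<N. (\<bar>\<theta> x j - \<theta> x i\<bar> - thinf i j) * sgn (\<theta> x j - \<theta> x i))) (at x)"
        if "i < N" for i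
        using dom'[OF that] unfolding a_def .
      have N0: "N > 0" using N2 by simp
      have der: "(E has_real_derivative D x) (at x)"
        unfolding E_def[abs_def] D_def
        by (rule energy_deriv[where a="a x", OF N0 sym dth' dom'' refl asym nz])
      have "0 \<le> (\<Sum>i<N. \<Sum>j<N. a x i j * (\<omega> x j - \<omega> x i)^2)"
        using anr by (auto intro!: sum_nonneg)
      then have "D x \<le> 0" unfolding D_def using Npos by (simp add: mult_nonneg_nonneg)
      then show ?thesis using der by simp
    qed
    have cEb: "continuous_on {s0..b} E" by (rule continuous_on_subset[OF cE]) (use s0 in auto)
    obtain l z where lz: "s0 < z" "z < b" "(E has_real_derivative l) (at z)" "E b - E s0 = (b - s0) * l"
      using MVT[OF b(1) cEb] Dx by (metis real_differentiable_def)
    have "l = D z" using DERIV_unique[OF lz(3)] Dx[OF lz(1,2)] by blast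
    then have "l \<le> 0" using Dx[OF lz(1,2)] by simp
    then have "(b - s0) * l \<le> 0" using b(1) by (simp add: mult_nonneg_nonpos)
    then have "E b \<le> E s0" using lz(4) by linarith
    then show False using above[OF b] s0(3) by simp
  qed
  have minb: "m - r \<le> Min {\<bar>\<theta> t j - \<theta> t i\<bar> | i j. i < N \<and> j < N \<and> i \<noteq> j}" if "t \<ge> 0" for t
  proof (rule Min.boundedI)
    show "finite {\<bar>\<theta> t j - \<theta> t i\<bar> | i j. i < N \<and> j < N \<and> i \<noteq> j}"
      by (rule finite_subset[where B="(\<lambda>(i,j). \<bar>\<theta> t j - \<theta> t i\<bar>) ` ({..<N}\<times>{..<N})"]) auto
    show "{\<bar>\<theta> t j - \<theta> t i\<bar> | i j. i < N \<and> j < N \<and> i \<noteq> j} \<noteq> {}"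
    proof -
      have "\<bar>\<theta> t 1 - \<theta> t 0\<bar> \<in> {\<bar>\<theta> t j - \<theta> t i\<bar> | i j. i < N \<and> j < N \<and> i \<noteq> j}"
        using N2 by (intro CollectI exI[of _ 0] exI[of _ 1]) auto
      then show ?thesis by blast
    qed
    fix v assume "v \<in> {\<bar>\<theta> t j - \<theta> t i\<bar> | i j. i < N \<and> j < N \<and> i \<noteq> j}"
    then obtain i j where "i < N" "j < N" "i \<noteq> j" "v = \<bar>\<theta> t j - \<theta> t i\<bar>" by blast
    then show "m - r \<le> v" using bnd[OF Ele[OF that]] by blast
  qed
  have "m - r \<le> (INF t\<in>{0..}. Min {\<bar>\<theta> t j - \<theta> t i\<bar> | i j. i < N \<and> j < N \<and> i \<noteq> j})"
    by (rule cINF_greatest) (use minb in auto)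
  then show ?thesis unfolding Leq using rm by simp
qed

end
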